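(* Let $m\ge2$, $n\ge1$, $f_i:\mathbb{R}^n\to\mathbb{R}$ ($i=1,\dots,m$) smooth, $\mathbf{r}\in\mathbb{R}^n$, and $\mathcal{G}$ an undirected graph on $\{1,\dots,m\}$ with Laplacian $\mathbf{L}$. Assume each $f_i$ has $L^g_{f_i}$-Lipschitz gradient and $L^H_{f_i}$-Lipschitz Hessian, each $f_i$ is coercive, and $\mathcal{G}$ is connected. Let $L_F^g=\max_iL^g_{f_i}$. Let $\boldsymbol\theta^0\in\mathbb{R}^{mn}$ satisfy $(\mathbf{1}_m^\top\otimes\mathbf{I}_n)\boldsymbol\theta^0=\mathbf{r}$. Then for any fixed step-size $0<\alpha\le\frac{1}{\|\sqrt{\mathbf{L}}\|^2L_F^g}$, the sequence generated by $\boldsymbol\theta^{k+1}=\boldsymbol\theta^k-\alpha\hat{\mathbf{L}}\nabla F(\boldsymbol\theta^k)$ satisfies $(\mathbf{1}_m^\top\otimes\mathbf{I}_n)\boldsymbol\theta^k=\mathbf{r}$ for all $k\ge0$ and $$\lim_{k\to\infty}\|\sqrt{\hat{\mathbf{L}}}\,\nabla F(\boldsymbol\theta^k)\|=0.$$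
   Context: $\boldsymbol\theta=[\boldsymbol\theta_1^\top,\dots,\boldsymbol\theta_m^\top]^\top\in\mathbb{R}^{mn}$, $F(\boldsymbol\theta)=\sum_i f_i(\boldsymbol\theta_i)$, $\nabla F$ the stacked gradient. $\sqrt{\mathbf{L}}$ is the unique symmetric positive semidefinite square root of $\mathbf{L}$; $\hat{\mathbf{L}}=\mathbf{L}\otimes\mathbf{I}_n$, $\sqrt{\hat{\mathbf{L}}}=\sqrt{\mathbf{L}}\otimes\mathbf{I}_n$; $\|\cdot\|$ on matrices is the spectral norm. *)

theory Defs
  imports "HOL-Analysis.Analysis"
begin

text \<open>C-infinity smoothness of a real-valued function on R^n: it is differentiable
  everywhere and all its first partial derivatives are again smooth (greatest fixed point,
  i.e. partial derivatives of every order exist).\<close>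
coinductive smooth_fun :: "(real^'n \<Rightarrow> real) \<Rightarrow> bool" where
  "(\<forall>x. f differentiable (at x)) \<Longrightarrow>
   (\<forall>j. smooth_fun (\<lambda>x. frechet_derivative f (at x) (axis j 1))) \<Longrightarrow> smooth_fun f"

definition coercive :: "(real^'n \<Rightarrow> real) \<Rightarrow> bool" where
  "coercive f \<longleftrightarrow> filterlim f at_top at_infinity"

definition laplacian :: "('m::finite \<Rightarrow> 'm \<Rightarrow> bool) \<Rightarrow> real^'m^'m" where
  "laplacian E = (\<chi> i j. if i = j then real (card {k. E i k}) else if E i j then -1 else 0)"

definition undirected_simple_graph :: "('m \<Rightarrow> 'm \<Rightarrow> bool) \<Rightarrow> bool" where
  "undirected_simple_graph E \<longleftrightarrow> (\<forall>i j. E i j \<longrightarrow> E j i) \<and> (\<forall>i. \<not> E i i)"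

definition graph_connected :: "('m \<Rightarrow> 'm \<Rightarrow> bool) \<Rightarrow> bool" where
  "graph_connected E \<longleftrightarrow> (\<forall>i j. E\<^sup>*\<^sup>* i j)"

definition psd :: "real^'m^'m \<Rightarrow> bool" where
  "psd S \<longleftrightarrow> transpose S = S \<and> (\<forall>x. 0 \<le> x \<bullet> (S *v x))"

definition psd_sqrt :: "real^'m^'m \<Rightarrow> real^'m^'m" where
  "psd_sqrt A = (THE S. psd S \<and> S ** S = A)"

definition spec_norm :: "real^'m^'k \<Rightarrow> real" where
  "spec_norm A = onorm (\<lambda>x. A *v x)"

text \<open>Action of a Kronecker product (M \<otimes> I_n) on a stacked vector: node i gets sum_j M_ij v_j.\<close>
definition kron_I :: "real^'m^'m \<Rightarrow> real^'n^'m \<Rightarrow> real^'n^'m" where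
  "kron_I M v = (\<chi> i. \<Sum>j\<in>UNIV. M $ i $ j *\<^sub>R v $ j)"

end

theory Submission
  imports Defs
begin


lemma sym_dot:
  fixes A :: "real^'m^'m"
  assumes "transpose A = A"
  shows "(A *v x) \<bullet> y = x \<bullet> (A *v y)"
proof -
  have "x \<bullet> (A *v y) = (x v* A) \<bullet> y" by (simp add: dot_lmul_matrix)
  also have "x v* A = A *v x" using vector_transpose_matrix[of x A] assms by simp
  finally show ?thesis by simp
qed

lemma quad_zero_scalar:
  fixes a c :: real
  assumes "\<And>t. 0 \<le> 2 * t * a + t^2 * c"
  shows "a = 0"
proof (rule ccontr)
  assume a: "a \<noteq> 0"
  define s where "s = 1 / (\<bar>c\<bar> + 1)"
  have s: "0 < s" "s * \<bar>c\<bar> < 1" unfolding s_def by (auto simp: field_simps)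
  have "s * c < 1" using s by (metis abs_ge_self dual_order.strict_trans2 mult_left_mono less_imp_le)
  have "0 \<le> 2 * (- a * s) * a + (- a * s)^2 * c" using assms by blast
  also have "\<dots> = a^2 * s * (s * c - 2)" by (simp add: power2_eq_square algebra_simps)
  finally have "0 \<le> a^2 * s * (s * c - 2)" .
  moreover have "a^2 * s > 0" using a s by simp
  moreover have "s * c - 2 < 0" using \<open>s * c < 1\<close> by simp
  ultimately show False by (metis linorder_not_le mult_pos_neg)
qed

lemma psd_kernel:
  fixes S :: "real^'m^'m"
  assumes "psd S" and "x \<bullet> (S *v x) = 0"
  shows "S *v x = 0"
proof -
  have sym: "transpose S = S" using assms(1) unfolding psd_def by simp
  let ?y = "S *v x"
  have "\<And>t. 0 \<le> 2 * t * (?y \<bullet> (S *v x)) + t^2 * (?y \<bullet> (S *v ?y))"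
  proof -
    fix t :: real
    have "0 \<le> (x + t *\<^sub>R ?y) \<bullet> (S *v (x + t *\<^sub>R ?y))" using assms(1) unfolding psd_def by blast
    also have "\<dots> = x \<bullet> (S *v x) + t * (x \<bullet> (S *v ?y)) + t * (?y \<bullet> (S *v x)) + t^2 * (?y \<bullet> (S *v ?y))"
      by (simp add: matrix_vector_right_distrib matrix_vector_mult_scaleR inner_add_left inner_add_right power2_eq_square algebra_simps)
    also have "x \<bullet> (S *v ?y) = ?y \<bullet> (S *v x)" using sym_dot[OF sym, of x ?y] by (simp add: inner_commute)
    finally show "0 \<le> 2 * t * (?y \<bullet> (S *v x)) + t^2 * (?y \<bullet> (S *v ?y))" using assms(2) by simp
  qed
  then have "?y \<bullet> (S *v x) = 0" by (rule quad_zero_scalar)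
  then show ?thesis by simp
qed


lemma quad_expand:
  fixes A :: "real^'m^'m"
  assumes "transpose A = A"
  shows "(v + t *\<^sub>R w) \<bullet> (A *v (v + t *\<^sub>R w)) =
    v \<bullet> (A *v v) + 2 * t * (w \<bullet> (A *v v)) + t^2 * (w \<bullet> (A *v w))"
proof -
  have "v \<bullet> (A *v w) = w \<bullet> (A *v v)" using sym_dot[OF assms, of w v] by (simp add: inner_commute)
  then show ?thesis
    by (simp add: matrix_vector_right_distrib matrix_vector_mult_scaleR inner_add_left inner_add_right power2_eq_square algebra_simps)
qed

lemma eig_exists:
  fixes A :: "real^'m^'m"
  assumes sym: "transpose A = A" and V: "subspace V" and inv: "\<And>x. x \<in> V \<Longrightarrow> A *v x \<in> V"
    and ne: "V \<noteq> {0}"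
  shows "\<exists>v\<in>V. norm v = 1 \<and> A *v v = (v \<bullet> (A *v v)) *\<^sub>R v"
proof -
  define K where "K = V \<inter> sphere 0 1"
  have "compact K" unfolding K_def
    using closed_subspace[OF V] compact_sphere by (simp add: closed_Int_compact)
  obtain z where z: "z \<in> V" "z \<noteq> 0" using ne V subspace_0 by blast
  have "z /\<^sub>R norm z \<in> K" unfolding K_def using z V by (simp add: subspace_scale)
  then have "K \<noteq> {}" by blast
  define q where "q = (\<lambda>x. x \<bullet> (A *v x))"
  have cq: "continuous_on K q" unfolding q_def
    by (intro continuous_intros matrix_vector_mult_linear_continuous_on continuous_on_inner)
  obtain v where v: "v \<in> K" and vmax: "\<And>x. x \<in> K \<Longrightarrow> q x \<le> q v"
    using continuous_attains_sup[OF \<open>compact K\<close> \<open>K \<noteq> {}\<close> cq] by blast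
  have vV: "v \<in> V" and nv: "norm v = 1" using v unfolding K_def by auto
  define \<mu> where "\<mu> = q v"
  have bound: "q x \<le> \<mu> * (norm x)^2" if "x \<in> V" for x
  proof (cases "x = 0")
    case True then show ?thesis by (simp add: q_def)
  next
    case False
    have "x /\<^sub>R norm x \<in> K" unfolding K_def using that False V by (simp add: subspace_scale)
    then have "q (x /\<^sub>R norm x) \<le> \<mu>" using vmax \<mu>_def by blast
    moreover have "q (x /\<^sub>R norm x) = q x / (norm x)^2"
      using False by (simp add: q_def matrix_vector_mult_scaleR power2_eq_square field_simps)
    ultimately have "q x / (norm x)^2 \<le> \<mu>" by simp
    then show ?thesis using False by (simp add: divide_le_eq mult.commute)
  qed
  define w where "w = A *v v - \<mu> *\<^sub>R v"
  have wV: "w \<in> V" unfolding w_def using inv vV V by (simp add: subspace_diff subspace_scale)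
  have "\<And>t. 0 \<le> 2 * t * (- (w \<bullet> w)) + t^2 * (\<mu> * (w \<bullet> w) - q w)"
  proof -
    fix t :: real
    have "q (v + t *\<^sub>R w) \<le> \<mu> * (norm (v + t *\<^sub>R w))^2"
      using bound wV vV V by (simp add: subspace_add subspace_scale)
    also have "(norm (v + t *\<^sub>R w))^2 = 1 + 2 * t * (v \<bullet> w) + t^2 * (w \<bullet> w)"
    proof -
      have vv: "v \<bullet> v = 1" using nv power2_norm_eq_inner[of v] by simp
      show ?thesis unfolding power2_norm_eq_inner
        using vv by (simp add: inner_add_left inner_add_right inner_commute power2_eq_square algebra_simps)
    qed
    finally have "q (v + t *\<^sub>R w) \<le> \<mu> * (1 + 2 * t * (v \<bullet> w) + t^2 * (w \<bullet> w))" .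
    moreover have "q (v + t *\<^sub>R w) = \<mu> + 2 * t * (w \<bullet> (A *v v)) + t^2 * q w"
      unfolding q_def using quad_expand[OF sym] \<mu>_def q_def by simp
    moreover have "w \<bullet> (A *v v) = w \<bullet> w + \<mu> * (v \<bullet> w)"
      unfolding w_def by (simp add: inner_diff_left inner_diff_right inner_commute algebra_simps)
    ultimately show "0 \<le> 2 * t * (- (w \<bullet> w)) + t^2 * (\<mu> * (w \<bullet> w) - q w)"
      by (simp add: algebra_simps)
  qed
  then have "- (w \<bullet> w) = 0" by (rule quad_zero_scalar)
  then have "w = 0" by simp
  then show ?thesis using vV nv unfolding w_def \<mu>_def q_def by auto
qed


lemma spectral_aux:
  fixes A :: "real^'m^'m"
  assumes sym: "transpose A = A"
  shows "subspace V \<Longrightarrow> (\<forall>x\<in>V. A *v x \<in> V) \<Longrightarrow> dim V = d \<Longrightarrow>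
    \<exists>B. B \<subseteq> V \<and> finite B \<and> card B = d \<and> pairwise orthogonal B \<and>
        (\<forall>b\<in>B. norm b = 1 \<and> A *v b = (b \<bullet> (A *v b)) *\<^sub>R b)"
proof (induction d arbitrary: V)
  case 0
  then show ?case by (intro exI[of _ "{}"]) auto
next
  case (Suc d)
  have "V \<noteq> {0}" using Suc.prems(3) by auto
  then obtain v where vV: "v \<in> V" and nv: "norm v = 1" and ev: "A *v v = (v \<bullet> (A *v v)) *\<^sub>R v"
    using eig_exists[OF sym Suc.prems(1)] Suc.prems(2) by blast
  have vv: "v \<bullet> v = 1" using nv power2_norm_eq_inner[of v] by simp
  define W where "W = V \<inter> {x. v \<bullet> x = 0}"
  have sW: "subspace W" unfolding W_def using Suc.prems(1) subspace_hyperplane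
    by (rule subspace_inter)
  have iW: "\<forall>x\<in>W. A *v x \<in> W"
  proof
    fix x assume x: "x \<in> W"
    have "v \<bullet> (A *v x) = (A *v v) \<bullet> x" using sym_dot[OF sym, of v x] by simp
    also have "\<dots> = (v \<bullet> (A *v v)) * (v \<bullet> x)" by (subst ev) simp
    also have "\<dots> = 0" using x unfolding W_def by simp
    finally show "A *v x \<in> W" using x Suc.prems(2) unfolding W_def by auto
  qed
  have vW: "v \<notin> W" using vv unfolding W_def by auto
  have spanW: "span W = W" using sW by (simp add: span_eq_iff)
  have "V = span (insert v W)"
  proof
    show "span (insert v W) \<subseteq> V"
      using vV Suc.prems(1) unfolding W_def by (intro span_minimal) auto
    show "V \<subseteq> span (insert v W)"
    proof
      fix x assume x: "x \<in> V"
      have "x - (v \<bullet> x) *\<^sub>R v \<in> W" unfolding W_def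
        using x vV Suc.prems(1) vv by (simp add: subspace_diff subspace_scale inner_diff_right)
      then have a: "x - (v \<bullet> x) *\<^sub>R v \<in> span (insert v W)" by (simp add: span_base)
      have b: "(v \<bullet> x) *\<^sub>R v \<in> span (insert v W)" by (simp add: span_base span_scale)
      have "x = (x - (v \<bullet> x) *\<^sub>R v) + (v \<bullet> x) *\<^sub>R v" by simp
      then show "x \<in> span (insert v W)" using span_add[OF a b] by metis
    qed
  qed
  then have "dim V = dim (insert v W)" by (simp add: dim_span)
  also have "\<dots> = dim W + 1" using vW spanW by (simp only: dim_insert) simp
  finally have "dim W = d" using Suc.prems(3) by simp
  then obtain B where B: "B \<subseteq> W" "finite B" "card B = d" "pairwise orthogonal B"
      "\<forall>b\<in>B. norm b = 1 \<and> A *v b = (b \<bullet> (A *v b)) *\<^sub>R b"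
    using Suc.IH[OF sW iW] by blast
  have "v \<notin> B" using B(1) vW by auto
  have po: "pairwise orthogonal (insert v B)"
    using B(1,4) unfolding pairwise_def W_def orthogonal_def by (auto simp: inner_commute)
  show ?case
    apply (intro exI[of _ "insert v B"])
    using B vV \<open>v \<notin> B\<close> po nv ev unfolding W_def by auto
qed


definition orthonormal_eig :: "real^'m^'m \<Rightarrow> (real^'m) set \<Rightarrow> bool" where
  "orthonormal_eig A B \<longleftrightarrow> finite B \<and> pairwise orthogonal B \<and>
     (\<forall>b\<in>B. norm b = 1 \<and> A *v b = (b \<bullet> (A *v b)) *\<^sub>R b) \<and> (\<forall>x. x = (\<Sum>b\<in>B. (b \<bullet> x) *\<^sub>R b))"

lemma ortho_coef:
  fixes B :: "(real^'m) set"
  assumes "finite B" "pairwise orthogonal B" "\<forall>b\<in>B. norm b = 1" "c \<in> B"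
  shows "c \<bullet> (\<Sum>b\<in>B. f b *\<^sub>R b) = f c"
proof -
  have "c \<bullet> (\<Sum>b\<in>B. f b *\<^sub>R b) = (\<Sum>b\<in>B. f b * (c \<bullet> b))" by (simp add: inner_sum_right)
  also have "\<dots> = (\<Sum>b\<in>B. if b = c then f c else 0)"
  proof (rule sum.cong)
    fix b assume b: "b \<in> B"
    show "f b * (c \<bullet> b) = (if b = c then f c else 0)"
    proof (cases "b = c")
      case True
      then have "c \<bullet> c = 1" using assms(3,4) power2_norm_eq_inner[of c] by simp
      then show ?thesis using True by simp
    next
      case False
      then have "c \<bullet> b = 0" using assms(2,4) b unfolding pairwise_def orthogonal_def by auto
      then show ?thesis using False by simp
    qed
  qed simp
  also have "\<dots> = f c" using assms(1,4) by simp
  finally show ?thesis .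
qed

lemma spectral:
  fixes A :: "real^'m^'m"
  assumes sym: "transpose A = A"
  shows "\<exists>B. orthonormal_eig A B"
proof -
  have "\<exists>B. B \<subseteq> UNIV \<and> finite B \<and> card B = dim (UNIV :: (real^'m) set) \<and> pairwise orthogonal B \<and>
        (\<forall>b\<in>B. norm b = 1 \<and> A *v b = (b \<bullet> (A *v b)) *\<^sub>R b)"
    by (rule spectral_aux[OF sym]) (simp_all add: subspace_UNIV)
  then obtain B where B: "finite B" "card B = dim (UNIV :: (real^'m) set)" "pairwise orthogonal B"
      "\<forall>b\<in>B. norm b = 1 \<and> A *v b = (b \<bullet> (A *v b)) *\<^sub>R b"
    by blast
  have "0 \<notin> B" using B(4) by force
  then have "independent B" using B(3) pairwise_orthogonal_independent by blast
  then have sp: "UNIV \<subseteq> span B" using card_eq_dim[of B UNIV] B(1,2) by blast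
  have "x = (\<Sum>b\<in>B. (b \<bullet> x) *\<^sub>R b)" for x
  proof -
    define y where "y = x - (\<Sum>b\<in>B. (b \<bullet> x) *\<^sub>R b)"
    have "orthogonal y c" if "c \<in> B" for c
    proof -
      have "c \<bullet> y = c \<bullet> x - c \<bullet> (\<Sum>b\<in>B. (b \<bullet> x) *\<^sub>R b)" unfolding y_def by (rule inner_diff_right)
      also have "c \<bullet> (\<Sum>b\<in>B. (b \<bullet> x) *\<^sub>R b) = c \<bullet> x"
        using ortho_coef[OF B(1,3) _ that, of "\<lambda>b. b \<bullet> x"] B(4) by blast
      finally show ?thesis unfolding orthogonal_def by (simp only: inner_commute[of y c])
    qed
    moreover have "y \<in> span B" using sp by blast
    ultimately have "orthogonal y y" by (rule orthogonal_to_span[rotated])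
    then have "y = 0" by (simp add: orthogonal_def)
    then show ?thesis unfolding y_def by simp
  qed
  then have "orthonormal_eig A B" using B unfolding orthonormal_eig_def by blast
  then show ?thesis by blast
qed

lemma psd_eigval_nonneg:
  assumes "psd A" "orthonormal_eig A B" "b \<in> B"
  shows "0 \<le> b \<bullet> (A *v b)"
  using assms unfolding psd_def by blast

lemma sqrt_exists:
  fixes A :: "real^'m^'m"
  assumes "psd A"
  shows "\<exists>S. psd S \<and> S ** S = A"
proof -
  have sym: "transpose A = A" using assms unfolding psd_def by simp
  obtain B where B: "orthonormal_eig A B" using spectral[OF sym] by blast
  have fB: "finite B" and poB: "pairwise orthogonal B" and nB: "\<forall>b\<in>B. norm b = 1"
    and eB: "\<And>b. b \<in> B \<Longrightarrow> A *v b = (b \<bullet> (A *v b)) *\<^sub>R b"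
    and xB: "\<And>x. x = (\<Sum>b\<in>B. (b \<bullet> x) *\<^sub>R b)"
    using B unfolding orthonormal_eig_def by auto
  define c where "c = (\<lambda>b. sqrt (b \<bullet> (A *v b)))"
  define S :: "real^'m^'m" where "S = (\<chi> i j. \<Sum>b\<in>B. c b * b $ i * b $ j)"
  have Sv: "S *v x = (\<Sum>b\<in>B. (c b * (b \<bullet> x)) *\<^sub>R b)" for x
  proof -
    have "(S *v x) $ i = (\<Sum>b\<in>B. (c b * (b \<bullet> x)) *\<^sub>R b) $ i" for i
    proof -
      have "(S *v x) $ i = (\<Sum>j\<in>UNIV. \<Sum>b\<in>B. c b * b $ i * b $ j * x $ j)"
        unfolding matrix_vector_mult_def S_def by (simp add: sum_distrib_right)
      also have "\<dots> = (\<Sum>b\<in>B. \<Sum>j\<in>UNIV. c b * b $ i * (b $ j * x $ j))"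
        by (subst sum.swap) (simp add: mult.assoc)
      also have "\<dots> = (\<Sum>b\<in>B. c b * b $ i * (b \<bullet> x))"
        by (simp add: inner_vec_def sum_distrib_left)
      also have "\<dots> = (\<Sum>b\<in>B. (c b * (b \<bullet> x)) *\<^sub>R b) $ i"
        by (simp add: sum_component mult.commute mult.left_commute)
      finally show ?thesis .
    qed
    then show ?thesis by (simp add: vec_eq_iff)
  qed
  have symS: "transpose S = S" unfolding S_def transpose_def
    by (simp add: vec_eq_iff mult.commute mult.left_commute)
  have "psd S" unfolding psd_def
  proof (intro conjI allI symS)
    fix x :: "real^'m"
    have "x \<bullet> (S *v x) = (\<Sum>b\<in>B. c b * (b \<bullet> x) * (b \<bullet> x))"
      unfolding Sv by (simp add: inner_sum_right inner_commute)
    also have "\<dots> \<ge> 0"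
      using psd_eigval_nonneg[OF assms B] unfolding c_def by (intro sum_nonneg) (auto simp: mult.assoc intro!: mult_nonneg_nonneg)
    finally show "0 \<le> x \<bullet> (S *v x)" .
  qed
  moreover have "S ** S = A" unfolding matrix_eq
  proof
    fix x :: "real^'m"
    have "(S ** S) *v x = S *v (S *v x)" by (simp add: matrix_vector_mul_assoc)
    also have "\<dots> = (\<Sum>b\<in>B. (c b * (b \<bullet> (S *v x))) *\<^sub>R b)" by (rule Sv)
    also have "\<dots> = (\<Sum>b\<in>B. (c b * (c b * (b \<bullet> x))) *\<^sub>R b)"
      unfolding Sv using ortho_coef[OF fB poB nB] by (intro sum.cong) auto
    also have "\<dots> = (\<Sum>b\<in>B. (b \<bullet> x) *\<^sub>R (A *v b))"
    proof (rule sum.cong)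
      fix b assume b: "b \<in> B"
      have "c b * c b = b \<bullet> (A *v b)" unfolding c_def using psd_eigval_nonneg[OF assms B b] by simp
      then show "(c b * (c b * (b \<bullet> x))) *\<^sub>R b = (b \<bullet> x) *\<^sub>R (A *v b)"
        by (subst eB[OF b]) (simp add: mult.assoc[symmetric] mult.commute)
    qed simp
    also have "\<dots> = A *v (\<Sum>b\<in>B. (b \<bullet> x) *\<^sub>R b)"
      by (simp add: vec.sum matrix_vector_mult_scaleR)
    also have "\<dots> = A *v x" using xB[of x] by simp
    finally show "(S ** S) *v x = A *v x" .
  qed
  ultimately show ?thesis by blast
qed


lemma sqrt_unique:
  fixes S T :: "real^'m^'m"
  assumes S: "psd S" and T: "psd T" and eq: "S ** S = T ** T"
  shows "S = T"
proof -
  have sS: "transpose S = S" and sT: "transpose T = T" using S T unfolding psd_def by auto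
  define D where "D = S - T"
  have sD: "transpose D = D" unfolding D_def using sS sT
    by (simp add: vec_eq_iff transpose_def)
  obtain B where B: "orthonormal_eig D B" using spectral[OF sD] by blast
  have Db: "D *v b = 0" if b: "b \<in> B" for b
  proof -
    have nb: "norm b = 1" and eb: "D *v b = (b \<bullet> (D *v b)) *\<^sub>R b"
      using B b unfolding orthonormal_eig_def by auto
    define \<mu> where "\<mu> = b \<bullet> (D *v b)"
    have bb: "b \<bullet> b = 1" using nb power2_norm_eq_inner[of b] by simp
    have SbT: "S *v b = T *v b + \<mu> *\<^sub>R b"
      using eb unfolding D_def \<mu>_def by (simp add: matrix_vector_mult_diff_rdistrib algebra_simps)
    have "(S *v b) \<bullet> (S *v b) = b \<bullet> ((S ** S) *v b)"
      using sym_dot[OF sS, of b "S *v b"] by (simp add: matrix_vector_mul_assoc)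
    also have "\<dots> = b \<bullet> ((T ** T) *v b)" using eq by simp
    also have "\<dots> = (T *v b) \<bullet> (T *v b)"
      using sym_dot[OF sT, of b "T *v b"] by (simp add: matrix_vector_mul_assoc)
    finally have "(S *v b) \<bullet> (S *v b) = (T *v b) \<bullet> (T *v b)" .
    then have "\<mu> * (2 * (b \<bullet> (T *v b)) + \<mu>) = 0"
      unfolding SbT using bb by (simp add: inner_add_left inner_add_right inner_commute algebra_simps)
    moreover have "\<mu> = b \<bullet> (S *v b) - b \<bullet> (T *v b)"
      unfolding \<mu>_def D_def by (simp add: matrix_vector_mult_diff_rdistrib inner_diff_right)
    moreover have "0 \<le> b \<bullet> (S *v b)" "0 \<le> b \<bullet> (T *v b)" using S T unfolding psd_def by auto
    ultimately have "\<mu> = 0 \<or> (b \<bullet> (S *v b) = 0 \<and> b \<bullet> (T *v b) = 0)" by auto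
    then show ?thesis
    proof
      assume "\<mu> = 0" then show ?thesis using eb \<mu>_def by simp
    next
      assume "b \<bullet> (S *v b) = 0 \<and> b \<bullet> (T *v b) = 0"
      then have "S *v b = 0" "T *v b = 0" using psd_kernel S T by auto
      then show ?thesis unfolding D_def by (simp add: matrix_vector_mult_diff_rdistrib)
    qed
  qed
  have "D *v x = 0" for x
  proof -
    have "D *v x = D *v (\<Sum>b\<in>B. (b \<bullet> x) *\<^sub>R b)" using B unfolding orthonormal_eig_def by metis
    also have "\<dots> = (\<Sum>b\<in>B. (b \<bullet> x) *\<^sub>R (D *v b))" by (simp add: vec.sum matrix_vector_mult_scaleR)
    also have "\<dots> = 0" using Db by simp
    finally show ?thesis .
  qed
  then show ?thesis unfolding matrix_eq D_def by (simp add: matrix_vector_mult_diff_rdistrib)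
qed

lemma psd_sqrt_props:
  fixes A :: "real^'m^'m"
  assumes "psd A"
  shows "psd (psd_sqrt A) \<and> psd_sqrt A ** psd_sqrt A = A"
proof -
  have "\<exists>!S. psd S \<and> S ** S = A"
    using sqrt_exists[OF assms] sqrt_unique by blast
  then show ?thesis unfolding psd_sqrt_def by (rule theI')
qed



lemma lap_entry:
  assumes "undirected_simple_graph E"
  shows "laplacian E $ i $ j = (if i = j then (\<Sum>k\<in>UNIV. if E i k then 1 else 0) else 0) - (if E i j then 1 else 0 :: real)"
  using assms unfolding laplacian_def undirected_simple_graph_def by (auto simp: sum.If_cases)

lemma lap_colsum:
  fixes E :: "'m::finite \<Rightarrow> 'm \<Rightarrow> bool"
  assumes "undirected_simple_graph E"
  shows "(\<Sum>i\<in>UNIV. laplacian E $ i $ j) = 0"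
proof -
  have sy: "E i j = E j i" for i j using assms unfolding undirected_simple_graph_def by blast
  have "(\<Sum>i\<in>UNIV. laplacian E $ i $ j) =
     (\<Sum>i\<in>UNIV. if i = j then (\<Sum>k\<in>UNIV. if E i k then 1 else 0) else 0) - (\<Sum>i\<in>UNIV. if E i j then 1 else 0 :: real)"
    by (simp add: lap_entry[OF assms] sum_subtractf)
  also have "\<dots> = 0" by (simp add: sy[of _ j])
  finally show ?thesis .
qed

lemma lap_psd:
  fixes E :: "'m::finite \<Rightarrow> 'm \<Rightarrow> bool"
  assumes G: "undirected_simple_graph E"
  shows "psd (laplacian E)"
proof -
  have sy: "E i j = E j i" for i j using assms unfolding undirected_simple_graph_def by blast
  define e where "e = (\<lambda>i j. if E i j then 1 else 0 :: real)"
  have esy: "e i j = e j i" for i j unfolding e_def using sy by simp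
  have tr: "transpose (laplacian E) = laplacian E"
    unfolding transpose_def by (simp add: vec_eq_iff lap_entry[OF G] sy)
  have "0 \<le> x \<bullet> (laplacian E *v x)" for x
  proof -
    have "x \<bullet> (laplacian E *v x) = (\<Sum>i\<in>UNIV. \<Sum>j\<in>UNIV. e i j * (x$i * x$i - x$i * x$j))"
    proof -
      have row: "(laplacian E *v x) $ i = (\<Sum>j\<in>UNIV. e i j * (x$i - x$j))" for i
      proof -
        have "(laplacian E *v x) $ i = (\<Sum>j\<in>UNIV. ((if i = j then (\<Sum>k\<in>UNIV. e i k) else 0) - e i j) * x$j)"
          unfolding matrix_vector_mult_def e_def by (simp add: lap_entry[OF G])
        also have "\<dots> = (\<Sum>k\<in>UNIV. e i k) * x$i - (\<Sum>j\<in>UNIV. e i j * x$j)"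
          by (simp add: left_diff_distrib sum_subtractf if_distrib[of "\<lambda>z. z * _"] cong: if_cong)
        also have "\<dots> = (\<Sum>j\<in>UNIV. e i j * (x$i - x$j))"
          by (simp add: sum_distrib_right right_diff_distrib sum_subtractf)
        finally show ?thesis .
      qed
      show ?thesis unfolding inner_vec_def row
        by (simp add: sum_distrib_left algebra_simps)
    qed
    also have "\<dots> = (\<Sum>i\<in>UNIV. \<Sum>j\<in>UNIV. e i j * (x$i - x$j)^2) / 2"
    proof -
      have swap: "(\<Sum>i\<in>UNIV. \<Sum>j\<in>UNIV. e i j * (x$j * x$j)) = (\<Sum>i\<in>UNIV. \<Sum>j\<in>UNIV. e i j * (x$i * x$i))"
        by (subst sum.swap) (simp add: esy)
      have "(\<Sum>i\<in>UNIV. \<Sum>j\<in>UNIV. e i j * (x$i - x$j)^2) =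
         (\<Sum>i\<in>UNIV. \<Sum>j\<in>UNIV. e i j * (x$i * x$i - x$i * x$j)) +
         ((\<Sum>i\<in>UNIV. \<Sum>j\<in>UNIV. e i j * (x$j * x$j)) - (\<Sum>i\<in>UNIV. \<Sum>j\<in>UNIV. e i j * (x$i * x$j)))"
        by (simp add: power2_eq_square algebra_simps sum.distrib sum_subtractf sum_distrib_left)
      also have "\<dots> = 2 * (\<Sum>i\<in>UNIV. \<Sum>j\<in>UNIV. e i j * (x$i * x$i - x$i * x$j))"
        unfolding swap by (simp add: algebra_simps sum.distrib sum_subtractf)
      finally show ?thesis by simp
    qed
    also have "\<dots> \<ge> 0" unfolding e_def by (intro divide_nonneg_pos sum_nonneg) auto
    finally show ?thesis .
  qed
  then show ?thesis unfolding psd_def using tr by blast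
qed

lemma kron_sum:
  fixes M :: "real^'m::finite^'m"
  assumes "\<And>j. (\<Sum>i\<in>UNIV. M $ i $ j) = 0"
  shows "(\<Sum>i\<in>UNIV. kron_I M v $ i) = 0"
proof -
  have "(\<Sum>i\<in>UNIV. kron_I M v $ i) = (\<Sum>j\<in>UNIV. (\<Sum>i\<in>UNIV. M $ i $ j) *\<^sub>R v $ j)"
    unfolding kron_I_def by (simp add: scaleR_sum_left) (rule sum.swap)
  then show ?thesis using assms by simp
qed

lemma kron_mult:
  fixes M N :: "real^'m::finite^'m" and v :: "real^'n^'m"
  shows "kron_I M (kron_I N v) = kron_I (M ** N) v"
proof -
  have "(\<Sum>j\<in>UNIV. M $ i $ j *\<^sub>R (\<Sum>k\<in>UNIV. N $ j $ k *\<^sub>R v $ k)) =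
        (\<Sum>k\<in>UNIV. (\<Sum>j\<in>UNIV. M $ i $ j * N $ j $ k) *\<^sub>R v $ k)" for i
    by (simp add: scaleR_sum_right scaleR_sum_left) (rule sum.swap)
  then show ?thesis unfolding kron_I_def matrix_matrix_mult_def by (simp add: vec_eq_iff)
qed

lemma kron_sym:
  fixes M :: "real^'m::finite^'m" and v w :: "real^'n^'m"
  assumes "transpose M = M"
  shows "w \<bullet> kron_I M v = kron_I M w \<bullet> v"
proof -
  have Msym: "M $ i $ j = M $ j $ i" for i j using assms unfolding transpose_def
    by (metis vec_lambda_beta)
  have "w \<bullet> kron_I M v = (\<Sum>i\<in>UNIV. \<Sum>j\<in>UNIV. M $ i $ j * (w $ i \<bullet> v $ j))"
    unfolding kron_I_def inner_vec_def[of w] by (simp add: inner_sum_right)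
  also have "\<dots> = (\<Sum>j\<in>UNIV. \<Sum>i\<in>UNIV. M $ j $ i * (w $ i \<bullet> v $ j))"
    by (subst sum.swap) (simp add: Msym)
  also have "\<dots> = kron_I M w \<bullet> v"
    unfolding kron_I_def inner_vec_def[of _ v] by (simp add: inner_sum_left)
  finally show ?thesis .
qed

lemma norm_sq_vec:
  fixes v :: "'a::real_inner^'m::finite"
  shows "(norm v)^2 = (\<Sum>i\<in>UNIV. (norm (v $ i))^2)"
  by (simp add: power2_norm_eq_inner inner_vec_def)

lemma kron_norm:
  fixes M :: "real^'m::finite^'m" and v :: "real^'n::finite^'m"
  shows "norm (kron_I M v) \<le> spec_norm M * norm v"
proof -
  define s where "s = spec_norm M"
  have s0: "0 \<le> s" unfolding s_def spec_norm_def by (rule onorm_pos_le[OF matrix_vector_mul_bounded_linear])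
  have Mb: "norm (M *v c) \<le> s * norm c" for c
    unfolding s_def spec_norm_def by (rule onorm[OF matrix_vector_mul_bounded_linear])
  define col where "col = (\<lambda>k. (\<chi> j. v $ j $ k) :: real^'m)"
  have comp: "kron_I M v $ i $ k = (M *v col k) $ i" for i k
    unfolding kron_I_def matrix_vector_mult_def col_def by (simp add: sum_component)
  have "(norm (kron_I M v))^2 = (\<Sum>i\<in>UNIV. \<Sum>k\<in>UNIV. ((M *v col k) $ i)^2)"
    unfolding norm_sq_vec[of "kron_I M v"] norm_sq_vec[of "kron_I M v $ _"] comp by simp
  also have "\<dots> = (\<Sum>k\<in>UNIV. (norm (M *v col k))^2)"
    by (subst sum.swap) (simp add: norm_sq_vec)
  also have "\<dots> \<le> (\<Sum>k\<in>UNIV. (s * norm (col k))^2)"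
    by (intro sum_mono power_mono Mb) simp
  also have "\<dots> = s^2 * (\<Sum>k\<in>UNIV. \<Sum>j\<in>UNIV. (v $ j $ k)^2)"
    by (simp add: power_mult_distrib sum_distrib_left norm_sq_vec col_def)
  also have "\<dots> = (s * norm v)^2"
    by (subst sum.swap) (simp add: power_mult_distrib norm_sq_vec)
  finally have "(norm (kron_I M v))^2 \<le> (s * norm v)^2" .
  then show ?thesis unfolding s_def[symmetric] using s0
    by (meson mult_nonneg_nonneg norm_ge_zero power2_le_imp_le)
qed



lemma descent:
  fixes f :: "real^'n::finite \<Rightarrow> real" and g :: "real^'n \<Rightarrow> real^'n"
  assumes grad: "\<And>x. (f has_derivative (\<lambda>h. g x \<bullet> h)) (at x)"
    and lip: "\<And>x y. norm (g x - g y) \<le> L * dist x y"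
  shows "f y \<le> f x + g x \<bullet> (y - x) + L / 2 * (norm (y - x))^2"
proof -
  define d where "d = y - x"
  define \<psi> where "\<psi> = (\<lambda>t::real. f (x + t *\<^sub>R d) - t * (g x \<bullet> d) - L / 2 * t^2 * (norm d)^2)"
  have "\<psi> 1 \<le> \<psi> 0"
  proof (rule DERIV_nonpos_imp_nonincreasing[of 0 1])
    fix t :: real assume t: "0 \<le> t" "t \<le> 1"
    have "((\<lambda>t. x + t *\<^sub>R d) has_derivative (\<lambda>s. s *\<^sub>R d)) (at t)"
      by (auto intro!: derivative_eq_intros)
    from has_derivative_compose[OF this grad[of "x + t *\<^sub>R d"]]
    have "((\<lambda>t. f (x + t *\<^sub>R d)) has_derivative (\<lambda>s. g (x + t *\<^sub>R d) \<bullet> (s *\<^sub>R d))) (at t)"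
      by (simp add: o_def)
    moreover have "(\<lambda>s. g (x + t *\<^sub>R d) \<bullet> (s *\<^sub>R d)) = (*) (g (x + t *\<^sub>R d) \<bullet> d)"
      by (auto simp: mult.commute)
    ultimately have D1: "((\<lambda>t. f (x + t *\<^sub>R d)) has_real_derivative (g (x + t *\<^sub>R d) \<bullet> d)) (at t)"
      by (simp add: has_field_derivative_def)
    have D: "(\<psi> has_real_derivative (g (x + t *\<^sub>R d) \<bullet> d - g x \<bullet> d - L * t * (norm d)^2)) (at t)"
      unfolding \<psi>_def
      by (rule derivative_eq_intros D1 refl)+ (simp add: algebra_simps)
    have "(g (x + t *\<^sub>R d) - g x) \<bullet> d \<le> norm (g (x + t *\<^sub>R d) - g x) * norm d"
      by (rule norm_cauchy_schwarz)
    also have "\<dots> \<le> (L * (t * norm d)) * norm d"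
      using lip[of "x + t *\<^sub>R d" x] t by (intro mult_right_mono) (auto simp: dist_norm)
    finally have "g (x + t *\<^sub>R d) \<bullet> d - g x \<bullet> d - L * t * (norm d)^2 \<le> 0"
      by (simp add: inner_diff_left power2_eq_square algebra_simps)
    then show "\<exists>y. (\<psi> has_real_derivative y) (at t) \<and> y \<le> 0" using D by blast
  qed simp
  then show ?thesis unfolding \<psi>_def d_def by (simp add: algebra_simps)
qed

lemma coercive_bdd_below:
  fixes f :: "real^'n::finite \<Rightarrow> real"
  assumes c: "coercive f" and cont: "continuous_on UNIV f"
  shows "\<exists>B. \<forall>x. B \<le> f x"
proof -
  have "eventually (\<lambda>x. 0 \<le> f x) at_infinity"
    using c unfolding coercive_def filterlim_at_top by blast
  then obtain b where b: "\<And>x. b \<le> norm x \<Longrightarrow> 0 \<le> f x"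
    unfolding eventually_at_infinity by blast
  have "compact (cball (0::real^'n) b)" by simp
  moreover have "cball (0::real^'n) b \<noteq> {} \<or> cball (0::real^'n) b = {}" by blast
  have "\<exists>B. \<forall>x\<in>cball 0 b. B \<le> f x"
  proof (cases "cball (0::real^'n) b = {}")
    case True then show ?thesis by blast
  next
    case False
    obtain s where "s \<in> cball 0 b" "\<forall>t\<in>cball 0 b. f s \<le> f t"
      using continuous_attains_inf[OF \<open>compact (cball 0 b)\<close> False continuous_on_subset[OF cont]] by blast
    then show ?thesis by blast
  qed
  then obtain B where B: "\<And>x. x \<in> cball 0 b \<Longrightarrow> B \<le> f x" by blast
  have "min B 0 \<le> f x" for x
  proof (cases "norm x \<le> b")
    case True then show ?thesis using B[of x] by simp
  next
    case False then show ?thesis using b[of x] by simp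
  qed
  then show ?thesis by blast
qed



theorem proposition2:
  fixes f :: "'m::finite \<Rightarrow> real^'n::finite \<Rightarrow> real"
    and g :: "'m \<Rightarrow> real^'n \<Rightarrow> real^'n"
    and H :: "'m \<Rightarrow> real^'n \<Rightarrow> real^'n^'n"
    and Lg LH :: "'m \<Rightarrow> real"
    and E :: "'m \<Rightarrow> 'm \<Rightarrow> bool"
    and r :: "real^'n"
    and \<theta> :: "nat \<Rightarrow> real^'n^'m"
    and \<alpha> :: real
  assumes m2: "CARD('m) \<ge> 2"
    and smooth: "\<And>i. smooth_fun (f i)"
    and grad: "\<And>i x. (f i has_derivative (\<lambda>h. g i x \<bullet> h)) (at x)"
    and hess: "\<And>i x. (g i has_derivative (\<lambda>h. H i x *v h)) (at x)"
    and lip_grad: "\<And>i x y. norm (g i x - g i y) \<le> Lg i * dist x y"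
    and lip_hess: "\<And>i x y. spec_norm (H i x - H i y) \<le> LH i * dist x y"
    and coer: "\<And>i. coercive (f i)"
    and graph: "undirected_simple_graph E"
    and conn: "graph_connected E"
    and init: "(\<Sum>i\<in>UNIV. \<theta> 0 $ i) = r"
    and alpha_pos: "0 < \<alpha>"
    and alpha_le: "\<alpha> \<le> 1 / ((spec_norm (psd_sqrt (laplacian E)))\<^sup>2 * Max (range Lg))"
    and iter: "\<And>k. \<theta> (Suc k) = \<theta> k - \<alpha> *\<^sub>R kron_I (laplacian E) (\<chi> i. g i (\<theta> k $ i))"
  shows "(\<forall>k. (\<Sum>i\<in>UNIV. \<theta> k $ i) = r) \<and>
         (\<lambda>k. norm (kron_I (psd_sqrt (laplacian E)) (\<chi> i. g i (\<theta> k $ i)))) \<longlonglongrightarrow> 0"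
proof -
  define L where "L = laplacian E"
  define S where "S = psd_sqrt L"
  have psdL: "psd L" unfolding L_def by (rule lap_psd[OF graph])
  have SS: "S ** S = L" and psdS: "psd S" using psd_sqrt_props[OF psdL] unfolding S_def by auto
  have symS: "transpose S = S" using psdS unfolding psd_def by simp
  define G where "G = (\<lambda>k. (\<chi> i. g i (\<theta> k $ i)) :: real^'n^'m)"
  define u where "u = (\<lambda>k. kron_I S (G k))"
  define F where "F = (\<lambda>th :: real^'n^'m. \<Sum>i\<in>UNIV. f i (th $ i))"
  define Lm where "Lm = Max (range Lg)"
  define s where "s = spec_norm S"
  have LgLm: "Lg i \<le> Lm" for i unfolding Lm_def by (rule Max_ge) auto
  have pos: "0 < s^2 * Lm"
  proof (rule ccontr)
    assume "\<not> 0 < s^2 * Lm"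
    then have "1 / (s^2 * Lm) \<le> 0" by (simp add: divide_nonpos_nonneg le_less_linear divide_nonpos_nonpos)
    then show False using alpha_le alpha_pos unfolding s_def S_def L_def Lm_def by linarith
  qed
  have aSL: "\<alpha> * (s^2 * Lm) \<le> 1"
    using alpha_le pos unfolding s_def S_def L_def Lm_def by (simp add: le_divide_eq)
  have Lm0: "0 < Lm" using pos by (auto simp: zero_less_mult_iff)
  have sums: "\<forall>k. (\<Sum>i\<in>UNIV. \<theta> k $ i) = r"
  proof
    fix k show "(\<Sum>i\<in>UNIV. \<theta> k $ i) = r"
    proof (induction k)
      case 0 then show ?case using init .
    next
      case (Suc k)
      have z: "(\<Sum>i\<in>UNIV. kron_I (laplacian E) (\<chi> i. g i (\<theta> k $ i)) $ i) = 0"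
        by (rule kron_sum[OF lap_colsum[OF graph]])
      have "(\<Sum>i\<in>UNIV. \<theta> (Suc k) $ i) = (\<Sum>i\<in>UNIV. \<theta> k $ i) -
              \<alpha> *\<^sub>R (\<Sum>i\<in>UNIV. kron_I (laplacian E) (\<chi> i. g i (\<theta> k $ i)) $ i)"
        unfolding iter by (simp add: sum_subtractf scaleR_sum_right)
      then show ?case using Suc.IH z by simp
    qed
  qed
  have step: "F (\<theta> (Suc k)) \<le> F (\<theta> k) - \<alpha> / 2 * (norm (u k))^2" for k
  proof -
    define d where "d = \<theta> (Suc k) - \<theta> k"
    have d_eq: "d = - (\<alpha> *\<^sub>R kron_I S (u k))"
      unfolding d_def iter u_def G_def kron_mult SS L_def by simp
    have "F (\<theta> (Suc k)) \<le> (\<Sum>i\<in>UNIV. f i (\<theta> k $ i) + G k $ i \<bullet> d $ i + Lg i / 2 * (norm (d $ i))^2)"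
      unfolding F_def
    proof (rule sum_mono)
      fix i
      have "\<theta> (Suc k) $ i - \<theta> k $ i = d $ i" unfolding d_def by simp
      then show "f i (\<theta> (Suc k) $ i) \<le> f i (\<theta> k $ i) + G k $ i \<bullet> d $ i + Lg i / 2 * (norm (d $ i))^2"
        using descent[OF grad lip_grad, of i "\<theta> (Suc k) $ i" "\<theta> k $ i"] unfolding G_def by simp
    qed
    also have "\<dots> \<le> (\<Sum>i\<in>UNIV. f i (\<theta> k $ i) + G k $ i \<bullet> d $ i + Lm / 2 * (norm (d $ i))^2)"
      by (intro sum_mono add_left_mono mult_right_mono) (auto simp: LgLm)
    also have "\<dots> = F (\<theta> k) + G k \<bullet> d + Lm / 2 * (norm d)^2"
      unfolding F_def inner_vec_def[of "G k" d] norm_sq_vec[of d]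
      by (simp add: sum.distrib sum_distrib_left)
    also have "G k \<bullet> d = - \<alpha> * (norm (u k))^2"
      unfolding d_eq using kron_sym[OF symS, of "G k" "u k"]
      by (simp add: u_def power2_norm_eq_inner)
    also have "(norm d)^2 \<le> \<alpha>^2 * (s^2 * (norm (u k))^2)"
    proof -
      have "norm d = \<alpha> * norm (kron_I S (u k))" using d_eq alpha_pos by simp
      also have "\<dots> \<le> \<alpha> * (s * norm (u k))"
        using kron_norm[of S "u k"] alpha_pos unfolding s_def by simp
      finally have "(norm d)^2 \<le> (\<alpha> * (s * norm (u k)))^2" by (simp add: power_mono)
      then show ?thesis by (simp add: power_mult_distrib)
    qed
    then have "Lm / 2 * (norm d)^2 \<le> Lm / 2 * (\<alpha>^2 * (s^2 * (norm (u k))^2))"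
      using Lm0 by simp
    then have "F (\<theta> k) + - \<alpha> * (norm (u k))^2 + Lm / 2 * (norm d)^2 \<le>
               F (\<theta> k) - \<alpha> * (norm (u k))^2 + (\<alpha> * (s^2 * Lm)) * (\<alpha> / 2 * (norm (u k))^2)"
      by (simp add: power2_eq_square algebra_simps)
    also have "(\<alpha> * (s^2 * Lm)) * (\<alpha> / 2 * (norm (u k))^2) \<le> 1 * (\<alpha> / 2 * (norm (u k))^2)"
      using aSL alpha_pos by (intro mult_right_mono) auto
    finally show ?thesis by simp
  qed
  have tele: "F (\<theta> N) + \<alpha> / 2 * (\<Sum>k<N. (norm (u k))^2) \<le> F (\<theta> 0)" for N
  proof (induction N)
    case 0 then show ?case by simp
  next
    case (Suc N) then show ?case using step[of N] by (simp add: algebra_simps)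
  qed
  have "\<forall>i. \<exists>B. \<forall>x. B \<le> f i x"
  proof
    fix i
    have "continuous_on UNIV (f i)"
      using has_derivative_continuous[OF grad[of i]] by (intro continuous_at_imp_continuous_on) auto
    then show "\<exists>B. \<forall>x. B \<le> f i x" using coercive_bdd_below[OF coer] by blast
  qed
  then obtain Bf where Bf: "\<And>i x. Bf i \<le> f i x" by metis
  have Flow: "(\<Sum>i\<in>UNIV. Bf i) \<le> F th" for th unfolding F_def by (intro sum_mono Bf)
  have "summable (\<lambda>k. (norm (u k))^2)"
  proof (rule summableI_nonneg_bounded)
    fix N
    have "\<alpha> / 2 * (\<Sum>k<N. (norm (u k))^2) \<le> F (\<theta> 0) - (\<Sum>i\<in>UNIV. Bf i)"
      using tele[of N] Flow[of "\<theta> N"] by simp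
    then show "(\<Sum>k<N. (norm (u k))^2) \<le> 2 / \<alpha> * (F (\<theta> 0) - (\<Sum>i\<in>UNIV. Bf i))"
      using alpha_pos by (simp add: field_simps)
  qed simp
  then have "(\<lambda>k. (norm (u k))^2) \<longlonglongrightarrow> 0" by (rule summable_LIMSEQ_zero)
  then have "(\<lambda>k. sqrt ((norm (u k))^2)) \<longlonglongrightarrow> sqrt 0" by (rule tendsto_real_sqrt)
  then have "(\<lambda>k. norm (u k)) \<longlonglongrightarrow> 0" by simp
  then show ?thesis using sums unfolding u_def G_def S_def L_def by simp
qed

end
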